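(* Let $\mathbf{X}=\mathbf{D}_1\boldsymbol{\Gamma}_1$ with $\boldsymbol{\Gamma}_1\neq 0$, and $\mathbf{Y}=\mathbf{X}+\mathbf{E}$ with $\|\mathbf{E}\|_{2,\infty}^{p}\le\epsilon_0$. Let $|\Gamma_1^{\min}|$ and $|\Gamma_1^{\max}|$ be the smallest and largest absolute values of the nonzero entries of $\boldsymbol{\Gamma}_1$. Let $\hat{\boldsymbol{\Gamma}}_1=\mathcal{S}_{\beta_1}(\mathbf{D}_1^T\mathbf{Y})$. Assume (a) $\|\boldsymbol{\Gamma}_1\|_{0,\infty}^{s}<\tfrac12\Big(1+\tfrac{1}{\mu(\mathbf{D}_1)}\tfrac{|\Gamma_1^{\min}|}{|\Gamma_1^{\max}|}\Big)-\tfrac{1}{\mu(\mathbf{D}_1)}\tfrac{\epsilon_0}{|\Gamma_1^{\max}|}$; and (b) $|\Gamma_1^{\min}|-(\|\boldsymbol{\Gamma}_1\|_{0,\infty}^{s}-1)\mu(\mathbf{D}_1)|\Gamma_1^{\max}|-\epsilon_0>\beta_1>\|\boldsymbol{\Gamma}_1\|_{0,\infty}^{s}\mu(\mathbf{D}_1)|\Gamma_1^{\max}|+\epsilon_0$. Then (1) the support of $\hat{\boldsymbol{\Gamma}}_1$ equals that of $\boldsymbol{\Gamma}_1$; and (2) $\|\boldsymbol{\Gamma}_1-\hat{\boldsymbol{\Gamma}}_1\|_{2,\infty}^{p}\le\sqrt{\|\boldsymbol{\Gamma}_1\|_{0,\infty}^{p}}\,\big(\epsilon_0+\mu(\mathb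f{D}_1)(\|\boldsymbol{\Gamma}_1\|_{0,\infty}^{s}-1)|\Gamma_1^{\max}|+\beta_1\big)$.
   Context: Setting. Signals are one-dimensional of length $N$ with periodic boundary conditions; $m_0=1$, $\boldsymbol{\Gamma}_0=\mathbf{X}$. For $i\ge1$, $\boldsymbol{\Gamma}_i\in\mathbb{R}^{Nm_i}$ has entry $km_i+r$ equal to the coefficient of filter $r$ at spatial shift $k$. $\mathbf{D}_i\in\mathbb{R}^{Nm_{i-1}\times Nm_i}$ is a (stride) convolutional dictionary whose column $km_i+r$ is local filter $r$ (length $n_{i-1}m_{i-1}$) placed cyclically on entries $km_{i-1},\dots,km_{i-1}+n_{i-1}m_{i-1}-1$, zero elsewhere; $\mathbf{D}_1\in\mathbb{R}^{N\times Nm_1}$ consists of all cyclic shifts of $m_1$ filters of length $n_0$. Columns have unit $\ell_2$ norm; $\mu(\mathbf{D})=\max_{i\neq j}|\mathbf{d}_i^T\mathbf{d}_j|$. Stripes: $\mathbf{S}_{i,j}\boldsymbol{\Gamma}_i$ is the subvector of $\boldsymbol{\Gamma}_i$ at spatial shifts $k\in\{j-n_{i-1}+1,\dots,j+n_{i-1}-1\}$ (mod $N$), all channels; $\|\boldsymbol{\Gamma}_i\|_{0,\infty}^{s}=\max_j\|\mathbf{S}_{i,j}\boldsymbol{\Gamma}_i\|_0$. Patches: for $i\ge0$, $\mathbf{P}_{i,j}\mathbf{V}$ extracts from $\mathbf{V}\in\mathbb{R}^{Nm_i}$ the cyclically contiguous subvector at spatial shifts $j,\dots,j+n_i-1$,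 all channels (length $n_im_i$); $\|\mathbf{V}\|_{2,\infty}^{p}=\max_j\|\mathbf{P}_{i,j}\mathbf{V}\|_2$, $\|\mathbf{V}\|_{0,\infty}^{p}=\max_j\|\mathbf{P}_{i,j}\mathbf{V}\|_0$. Soft thresholding: $\mathcal{S}_\beta$ acts entrywise, $\mathcal{S}_\beta(z)=z+\beta$ if $z<-\beta$, $0$ if $|z|\le\beta$, $z-\beta$ if $z>\beta$. *)

theory Defs
  imports Complex_Main
begin

text \<open>Multichannel periodic signals of spatial length N with m channels are
functions V :: nat => real; entry k*m + r (k < N, r < m) is channel r at spatial shift k.\<close>

definition shift_dist :: "nat \<Rightarrow> nat \<Rightarrow> nat \<Rightarrow> nat" where
  "shift_dist N j k = (k + N - j) mod N"

definition patch_set :: "nat \<Rightarrow> nat \<Rightarrow> nat \<Rightarrow> nat \<Rightarrow> nat set" where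
  "patch_set N n m j = {c. c < N * m \<and> shift_dist N j (c div m) < n}"

text \<open>Stripe S_{i,j}: shifts j-n+1, ..., j+n-1 (mod N), all channels.\<close>
definition stripe_set :: "nat \<Rightarrow> nat \<Rightarrow> nat \<Rightarrow> nat \<Rightarrow> nat set" where
  "stripe_set N n m j = {c. c < N * m \<and>
      (shift_dist N j (c div m) < n \<or> N - shift_dist N j (c div m) < n)}"

definition norm_2inf_p :: "nat \<Rightarrow> nat \<Rightarrow> nat \<Rightarrow> (nat \<Rightarrow> real) \<Rightarrow> real" where
  "norm_2inf_p N n m V = Max ((\<lambda>j. sqrt (\<Sum>c\<in>patch_set N n m j. (V c)\<^sup>2)) ` {..<N})"

definition norm_0inf_p :: "nat \<Rightarrow> nat \<Rightarrow> nat \<Rightarrow> (nat \<Rightarrow> real) \<Rightarrow> nat" where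
  "norm_0inf_p N n m V = Max ((\<lambda>j. card {c \<in> patch_set N n m j. V c \<noteq> 0}) ` {..<N})"

definition norm_0inf_s :: "nat \<Rightarrow> nat \<Rightarrow> nat \<Rightarrow> (nat \<Rightarrow> real) \<Rightarrow> nat" where
  "norm_0inf_s N n m V = Max ((\<lambda>j. card {c \<in> stripe_set N n m j. V c \<noteq> 0}) ` {..<N})"

text \<open>Entry (i, c) of D_1 (N x N*m1): column c = k*m1 + r is filter r (length n0)
placed cyclically on entries k, ..., k+n0-1.\<close>
definition dict1 :: "nat \<Rightarrow> nat \<Rightarrow> nat \<Rightarrow> (nat \<Rightarrow> nat \<Rightarrow> real) \<Rightarrow> nat \<Rightarrow> nat \<Rightarrow> real" where
  "dict1 N n0 m1 f i c =
     (let k = c div m1; r = c mod m1; t = shift_dist N k i in if t < n0 then f r t else 0)"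

definition mat_vec :: "nat \<Rightarrow> nat \<Rightarrow> (nat \<Rightarrow> nat \<Rightarrow> real) \<Rightarrow> (nat \<Rightarrow> real) \<Rightarrow> nat \<Rightarrow> real" where
  "mat_vec rows cols D v = (\<lambda>i. if i < rows then (\<Sum>c<cols. D i c * v c) else 0)"

definition matT_vec :: "nat \<Rightarrow> nat \<Rightarrow> (nat \<Rightarrow> nat \<Rightarrow> real) \<Rightarrow> (nat \<Rightarrow> real) \<Rightarrow> nat \<Rightarrow> real" where
  "matT_vec rows cols D v = (\<lambda>c. if c < cols then (\<Sum>i<rows. D i c * v i) else 0)"

text \<open>Mutual coherence (0 added only to make the set nonempty; entries are nonnegative).\<close>
definition coherence :: "nat \<Rightarrow> nat \<Rightarrow> (nat \<Rightarrow> nat \<Rightarrow> real) \<Rightarrow> real" where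
  "coherence rows cols D = Max (insert 0
     {\<bar>\<Sum>i<rows. D i a * D i b\<bar> | a b. a < cols \<and> b < cols \<and> a \<noteq> b})"

definition soft_thr :: "real \<Rightarrow> real \<Rightarrow> real" where
  "soft_thr \<beta> z = (if z < - \<beta> then z + \<beta> else if z > \<beta> then z - \<beta> else 0)"

definition supp :: "nat \<Rightarrow> (nat \<Rightarrow> real) \<Rightarrow> nat set" where
  "supp L v = {c. c < L \<and> v c \<noteq> 0}"

definition abs_min_nz :: "nat \<Rightarrow> (nat \<Rightarrow> real) \<Rightarrow> real" where
  "abs_min_nz L v = Min ((\<lambda>c. \<bar>v c\<bar>) ` supp L v)"

definition abs_max_nz :: "nat \<Rightarrow> (nat \<Rightarrow> real) \<Rightarrow> real" where
  "abs_max_nz L v = Max ((\<lambda>c. \<bar>v c\<bar>) ` supp L v)"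

end

theory Submission
  imports Defs "HOL-Analysis.L2_Norm"
begin

lemma sd_eq: "a < N \<Longrightarrow> b < N \<Longrightarrow> shift_dist N a b = (if a \<le> b then b - a else b + N - a)"
  unfolding shift_dist_def
  by (auto simp: mod_if)

lemma overlap:
  assumes "ka < N" "kb < N" "i < N" "n0 \<le> N"
    and "shift_dist N ka i < n0" "shift_dist N kb i < n0"
  shows "shift_dist N ka kb < n0 \<or> N - shift_dist N ka kb < n0"
  using assms by (simp add: sd_eq split: if_splits; arith)

lemma noise_bound:
  fixes D :: "nat \<Rightarrow> nat \<Rightarrow> real"
  assumes "c < N * m1" "1 \<le> m1" "1 \<le> N"
    and Ddef: "D = dict1 N n0 m1 f"
    and unit: "(\<Sum>i<N. (D i c)\<^sup>2) = 1"
    and noise: "norm_2inf_p N n0 1 E \<le> \<epsilon>0"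
  shows "\<bar>\<Sum>i<N. D i c * E i\<bar> \<le> \<epsilon>0"
proof -
  define k where "k = c div m1"
  have k: "k < N" using assms(1,2) unfolding k_def
    by (simp add: div_less_iff_less_mult mult.commute)
  define W where "W = patch_set N n0 1 k"
  have W: "W = {i. i < N \<and> shift_dist N k i < n0}" unfolding W_def patch_set_def by simp
  have z: "D i c = 0" if "i < N" "i \<notin> W" for i
    using that unfolding W Ddef dict1_def k_def by (auto simp: Let_def)
  have sub: "W \<subseteq> {..<N}" using W by auto
  have e1: "(\<Sum>i<N. D i c * E i) = (\<Sum>i\<in>W. D i c * E i)"
    by (rule sum.mono_neutral_left[symmetric]) (use sub z in auto)
  have e2: "(\<Sum>i<N. (D i c)\<^sup>2) = (\<Sum>i\<in>W. (D i c)\<^sup>2)"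
    by (rule sum.mono_neutral_left[symmetric]) (use sub z in auto)
  have "\<bar>\<Sum>i\<in>W. D i c * E i\<bar> \<le> (\<Sum>i\<in>W. \<bar>D i c\<bar> * \<bar>E i\<bar>)"
    by (rule order_trans[OF sum_abs]) (simp add: abs_mult)
  also have "\<dots> \<le> L2_set (\<lambda>i. D i c) W * L2_set E W" by (rule L2_set_mult_ineq)
  also have "L2_set (\<lambda>i. D i c) W = 1" using unit e2 by (simp add: L2_set_def)
  also have "L2_set E W \<le> norm_2inf_p N n0 1 E"
    unfolding norm_2inf_p_def L2_set_def W_def
    by (rule Max_ge) (use k in auto)
  finally show ?thesis using e1 noise by simp
qed

lemma coh_ge:
  assumes "a < L" "b < L" "a \<noteq> b"
  shows "\<bar>\<Sum>i<N. D i a * D i b\<bar> \<le> coherence N L D"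
proof -
  have fin: "finite {\<bar>\<Sum>i<N. D i a * D i b\<bar> | a b. a < L \<and> b < L \<and> a \<noteq> b}"
    by (rule finite_subset[of _ "(\<lambda>(a,b). \<bar>\<Sum>i<N. D i a * D i b\<bar>) ` ({..<L}\<times>{..<L})"]) auto
  show ?thesis unfolding coherence_def
    by (rule Max_ge) (use fin assms in auto)
qed

lemma coh_nonneg: "0 \<le> coherence N L D"
proof -
  have fin: "finite {\<bar>\<Sum>i<N. D i a * D i b\<bar> | a b. a < L \<and> b < L \<and> a \<noteq> b}"
    by (rule finite_subset[of _ "(\<lambda>(a,b). \<bar>\<Sum>i<N. D i a * D i b\<bar>) ` ({..<L}\<times>{..<L})"]) auto
  show ?thesis unfolding coherence_def
    by (rule Max_ge) (use fin in auto)
qed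

lemma gmax_ge: "c < L \<Longrightarrow> v c \<noteq> 0 \<Longrightarrow> \<bar>v c\<bar> \<le> abs_max_nz L v"
  unfolding abs_max_nz_def supp_def
  by (auto intro!: Max_ge)

lemma gmin_le: "c < L \<Longrightarrow> v c \<noteq> 0 \<Longrightarrow> abs_min_nz L v \<le> \<bar>v c\<bar>"
  unfolding abs_min_nz_def supp_def
  by (auto intro!: Min_le)

lemma interf:
  fixes D :: "nat \<Rightarrow> nat \<Rightarrow> real"
  assumes "c < N * m1" "1 \<le> m1" "n0 \<le> N"
    and Ddef: "D = dict1 N n0 m1 f"
  shows "\<bar>\<Sum>c'\<in>{..<N*m1}-{c}. (\<Sum>i<N. D i c * D i c') * \<Gamma> c'\<bar>
     \<le> real (card ({c'\<in>stripe_set N n0 m1 (c div m1). \<Gamma> c' \<noteq> 0} - {c}))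
        * coherence N (N*m1) D * abs_max_nz (N*m1) \<Gamma>"
proof -
  define T where "T = {c'\<in>stripe_set N n0 m1 (c div m1). \<Gamma> c' \<noteq> 0} - {c}"
  have Tsub: "T \<subseteq> {..<N*m1}-{c}" unfolding T_def stripe_set_def by auto
  have divl: "x div m1 < N" if "x < N*m1" for x
    using that assms(2) by (simp add: div_less_iff_less_mult mult.commute)
  have zero: "(\<Sum>i<N. D i c * D i c') * \<Gamma> c' = 0" if "c' \<in> {..<N*m1}-{c} - T" for c'
  proof (cases "\<Gamma> c' = 0")
    case False
    have nst: "c' \<notin> stripe_set N n0 m1 (c div m1)" using that False unfolding T_def by auto
    have "(\<Sum>i<N. D i c * D i c') = 0"
    proof (rule ccontr)
      assume "(\<Sum>i<N. D i c * D i c') \<noteq> 0"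
      then obtain i where i: "i < N" "D i c * D i c' \<noteq> 0"
        using sum.neutral[of "{..<N}" "\<lambda>i. D i c * D i c'"] by auto
      have h1: "shift_dist N (c div m1) i < n0" and h2: "shift_dist N (c' div m1) i < n0"
        using i(2) unfolding Ddef dict1_def by (auto simp: Let_def split: if_splits)
      have "shift_dist N (c div m1) (c' div m1) < n0 \<or> N - shift_dist N (c div m1) (c' div m1) < n0"
        by (rule overlap[OF divl divl i(1) assms(3) h1 h2]) (use assms(1) that in auto)
      then show False using nst that unfolding stripe_set_def by auto
    qed
    then show ?thesis by simp
  qed simp
  have "(\<Sum>c'\<in>{..<N*m1}-{c}. (\<Sum>i<N. D i c * D i c') * \<Gamma> c') = (\<Sum>c'\<in>T. (\<Sum>i<N. D i c * D i c') * \<Gamma> c')"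
    by (rule sum.mono_neutral_right) (use Tsub zero in auto)
  moreover have "\<bar>\<Sum>c'\<in>T. (\<Sum>i<N. D i c * D i c') * \<Gamma> c'\<bar> \<le> (\<Sum>c'\<in>T. coherence N (N*m1) D * abs_max_nz (N*m1) \<Gamma>)"
  proof (rule order_trans[OF sum_abs], rule sum_mono)
    fix c' assume "c' \<in> T"
    then have c': "c' < N*m1" "c' \<noteq> c" "\<Gamma> c' \<noteq> 0" using Tsub unfolding T_def by auto
    show "\<bar>(\<Sum>i<N. D i c * D i c') * \<Gamma> c'\<bar> \<le> coherence N (N*m1) D * abs_max_nz (N*m1) \<Gamma>"
      unfolding abs_mult
      by (rule mult_mono[OF coh_ge gmax_ge]) (use c' assms(1) coh_nonneg in auto)
  qed
  ultimately show ?thesis unfolding T_def by simp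
qed

lemma soft_zero: "\<bar>z\<bar> \<le> \<beta> \<Longrightarrow> soft_thr \<beta> z = 0"
  unfolding soft_thr_def by auto
lemma soft_nz: "\<bar>z\<bar> > \<beta> \<Longrightarrow> 0 \<le> \<beta> \<Longrightarrow> soft_thr \<beta> z \<noteq> 0"
  unfolding soft_thr_def by auto
lemma soft_close: "0 \<le> \<beta> \<Longrightarrow> \<bar>z - soft_thr \<beta> z\<bar> \<le> \<beta>"
  unfolding soft_thr_def by auto

theorem lemma2:
  fixes N n0 n1 m1 :: nat
    and f :: "nat \<Rightarrow> nat \<Rightarrow> real"
    and \<Gamma> E Y \<Gamma>hat :: "nat \<Rightarrow> real"
    and \<epsilon>0 \<beta>1 \<mu> gmin gmax s :: real
  assumes "1 \<le> n0" and "n0 \<le> N" and "1 \<le> n1" and "n1 \<le> N" and "1 \<le> m1"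
    and unit: "\<forall>c < N * m1. (\<Sum>i<N. (dict1 N n0 m1 f i c)\<^sup>2) = 1"
    and Y_def: "Y = (\<lambda>i. mat_vec N (N * m1) (dict1 N n0 m1 f) \<Gamma> i + E i)"
    and \<Gamma>hat_def: "\<Gamma>hat = (\<lambda>c. soft_thr \<beta>1 (matT_vec N (N * m1) (dict1 N n0 m1 f) Y c))"
    and \<mu>_def: "\<mu> = coherence N (N * m1) (dict1 N n0 m1 f)"
    and gmin_def: "gmin = abs_min_nz (N * m1) \<Gamma>"
    and gmax_def: "gmax = abs_max_nz (N * m1) \<Gamma>"
    and s_def: "s = real (norm_0inf_s N n0 m1 \<Gamma>)"
    and nz: "\<exists>c < N * m1. \<Gamma> c \<noteq> 0"
    and noise: "norm_2inf_p N n0 1 E \<le> \<epsilon>0"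
    and a: "s < 1/2 * (1 + 1/\<mu> * (gmin / gmax)) - 1/\<mu> * (\<epsilon>0 / gmax)"
    and b1: "gmin - (s - 1) * \<mu> * gmax - \<epsilon>0 > \<beta>1"
    and b2: "\<beta>1 > s * \<mu> * gmax + \<epsilon>0"
  shows "supp (N * m1) \<Gamma>hat = supp (N * m1) \<Gamma> \<and>
         norm_2inf_p N n1 m1 (\<lambda>c. \<Gamma> c - \<Gamma>hat c)
           \<le> sqrt (real (norm_0inf_p N n1 m1 \<Gamma>)) * (\<epsilon>0 + \<mu> * (s - 1) * gmax + \<beta>1)"
proof -
  define L where "L = N * m1"
  define D where "D = dict1 N n0 m1 f"
  have N1: "1 \<le> N" using assms(1,2) by simp
  have divl: "x div m1 < N" if "x < L" for x
    using that assms(5) unfolding L_def by (simp add: div_less_iff_less_mult mult.commute)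
  have eps0: "0 \<le> \<epsilon>0"
  proof -
    have "0 \<le> sqrt (\<Sum>c\<in>patch_set N n0 1 0. (E c)\<^sup>2)" by (simp add: sum_nonneg)
    also have "\<dots> \<le> norm_2inf_p N n0 1 E" unfolding norm_2inf_p_def
      by (rule Max_ge) (use N1 in auto)
    finally show ?thesis using noise by simp
  qed
  have mu0: "0 \<le> \<mu>" unfolding \<mu>_def by (rule coh_nonneg)
  obtain c0 where c0: "c0 < L" "\<Gamma> c0 \<noteq> 0" using nz unfolding L_def by auto
  have gmax0: "0 \<le> gmax" using gmax_ge[of c0 L \<Gamma>] c0 unfolding gmax_def L_def by simp
  have beta0: "0 \<le> \<beta>1"
  proof -
    have "0 \<le> s" unfolding s_def by simp
    then have "0 \<le> s * \<mu> * gmax" using mu0 gmax0 by simp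
    then show ?thesis using b2 eps0 by linarith
  qed
  define z where "z c = matT_vec N L D Y c" for c
  define R where "R c = (\<Sum>c'\<in>{..<L}-{c}. (\<Sum>i<N. D i c * D i c') * \<Gamma> c')" for c
  define ne where "ne c = (\<Sum>i<N. D i c * E i)" for c
  define K where "K c = card ({c'\<in>stripe_set N n0 m1 (c div m1). \<Gamma> c' \<noteq> 0} - {c})" for c
  have zexp: "z c = \<Gamma> c + R c + ne c" if c: "c < L" for c
  proof -
    have "z c = (\<Sum>i<N. D i c * ((\<Sum>c'<L. D i c' * \<Gamma> c') + E i))"
      unfolding z_def matT_vec_def Y_def mat_vec_def D_def L_def using c L_def by simp
    also have "\<dots> = (\<Sum>i<N. \<Sum>c'<L. D i c * D i c' * \<Gamma> c') + ne c"
      unfolding ne_def by (simp add: distrib_left sum_distrib_left sum.distrib mult.assoc)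
    also have "(\<Sum>i<N. \<Sum>c'<L. D i c * D i c' * \<Gamma> c') = (\<Sum>c'<L. (\<Sum>i<N. D i c * D i c') * \<Gamma> c')"
      by (subst sum.swap) (simp add: sum_distrib_right)
    also have "\<dots> = (\<Sum>i<N. D i c * D i c) * \<Gamma> c + R c"
      unfolding R_def using c by (subst sum.remove[of _ c]) auto
    also have "(\<Sum>i<N. D i c * D i c) = 1" using unit c unfolding D_def L_def
      by (simp add: power2_eq_square)
    finally show ?thesis by simp
  qed
  have neb: "\<bar>ne c\<bar> \<le> \<epsilon>0" if "c < L" for c
    unfolding ne_def
    by (rule noise_bound[OF _ assms(5) N1 D_def _ noise]) (use that unit in \<open>auto simp: L_def D_def\<close>)
  have Rb: "\<bar>R c\<bar> \<le> real (K c) * \<mu> * gmax" if "c < L" for c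
    unfolding R_def K_def \<mu>_def gmax_def L_def D_def
    using interf[OF _ assms(5) assms(2) refl, of c f \<Gamma>] that unfolding L_def by simp
  have Ks: "real (card {c'\<in>stripe_set N n0 m1 (c div m1). \<Gamma> c' \<noteq> 0}) \<le> s" if "c < L" for c
  proof -
    have "card {c'\<in>stripe_set N n0 m1 (c div m1). \<Gamma> c' \<noteq> 0} \<le> norm_0inf_s N n0 m1 \<Gamma>"
      unfolding norm_0inf_s_def by (rule Max_ge) (use divl[OF that] in auto)
    then show ?thesis unfolding s_def by simp
  qed
  have fstr: "finite {c'\<in>stripe_set N n0 m1 j. \<Gamma> c' \<noteq> 0}" for j
    by (rule finite_subset[of _ "{..<N*m1}"]) (auto simp: stripe_set_def)
  have cin: "c \<in> stripe_set N n0 m1 (c div m1)" if "c < L" for c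
    using that divl[OF that] assms(1) unfolding stripe_set_def shift_dist_def L_def by simp
  define B where "B = \<epsilon>0 + \<mu> * (s - 1) * gmax + \<beta>1"
  have key: "(\<Gamma> c \<noteq> 0 \<longleftrightarrow> \<Gamma>hat c \<noteq> 0) \<and> (\<Gamma> c \<noteq> 0 \<longrightarrow> \<bar>\<Gamma> c - \<Gamma>hat c\<bar> \<le> B)"
    if c: "c < L" for c
  proof -
    have hat: "\<Gamma>hat c = soft_thr \<beta>1 (z c)"
      unfolding \<Gamma>hat_def z_def D_def L_def by simp
    show ?thesis
    proof (cases "\<Gamma> c = 0")
      case True
      have "K c \<le> card {c'\<in>stripe_set N n0 m1 (c div m1). \<Gamma> c' \<noteq> 0}"
        unfolding K_def by (rule card_mono[OF fstr]) auto
      then have "real (K c) \<le> s" using Ks[OF c] by linarith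
      then have "real (K c) * \<mu> * gmax \<le> s * \<mu> * gmax"
        using mu0 gmax0 by (simp add: mult_right_mono mult_nonneg_nonneg mult.assoc)
      then have "\<bar>z c\<bar> \<le> \<beta>1" using zexp[OF c] Rb[OF c] neb[OF c] True b2 by linarith
      then show ?thesis using True hat soft_zero by simp
    next
      case False
      have "K c + 1 = card {c'\<in>stripe_set N n0 m1 (c div m1). \<Gamma> c' \<noteq> 0}"
        unfolding K_def using cin[OF c] False fstr
        by (subst card_Diff_singleton) (auto simp: card_gt_0_iff Suc_le_eq intro!: Suc_pred)
      then have "real (K c) \<le> s - 1" using Ks[OF c] by linarith
      then have RR: "real (K c) * \<mu> * gmax \<le> (s - 1) * \<mu> * gmax"
        using mu0 gmax0 by (simp add: mult_right_mono mult_nonneg_nonneg mult.assoc)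
      have gm: "gmin \<le> \<bar>\<Gamma> c\<bar>" using gmin_le[of c L \<Gamma>] c False unfolding gmin_def L_def by simp
      have zz: "\<bar>z c - \<Gamma> c\<bar> \<le> (s - 1) * \<mu> * gmax + \<epsilon>0"
        using zexp[OF c] Rb[OF c] neb[OF c] RR by linarith
      have "\<bar>z c\<bar> > \<beta>1" using zz gm b1 by linarith
      then have "\<Gamma>hat c \<noteq> 0" using hat soft_nz beta0 by simp
      moreover have "\<bar>\<Gamma> c - \<Gamma>hat c\<bar> \<le> B"
        using zz soft_close[OF beta0, of "z c"] hat unfolding B_def by (simp add: algebra_simps)
      ultimately show ?thesis using False by simp
    qed
  qed
  have part1: "supp L \<Gamma>hat = supp L \<Gamma>" unfolding supp_def using key by auto
  have B0: "0 \<le> B"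
  proof -
    have "0 \<le> s - 1"
    proof -
      have "1 \<le> real (card {c'\<in>stripe_set N n0 m1 (c0 div m1). \<Gamma> c' \<noteq> 0})"
        using cin[OF c0(1)] c0 fstr by (simp add: Suc_le_eq card_gt_0_iff) blast
      then show ?thesis using Ks[OF c0(1)] by linarith
    qed
    then show ?thesis unfolding B_def using mu0 gmax0 eps0 beta0 by simp
  qed
  have part2: "norm_2inf_p N n1 m1 (\<lambda>c. \<Gamma> c - \<Gamma>hat c) \<le> sqrt (real (norm_0inf_p N n1 m1 \<Gamma>)) * B"
    unfolding norm_2inf_p_def
  proof (rule Max.boundedI)
    show "finite ((\<lambda>j. sqrt (\<Sum>c\<in>patch_set N n1 m1 j. (\<Gamma> c - \<Gamma>hat c)\<^sup>2)) ` {..<N})" by simp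
    show "(\<lambda>j. sqrt (\<Sum>c\<in>patch_set N n1 m1 j. (\<Gamma> c - \<Gamma>hat c)\<^sup>2)) ` {..<N} \<noteq> {}" using N1 by (auto simp: lessThan_empty_iff)
    fix x assume "x \<in> (\<lambda>j. sqrt (\<Sum>c\<in>patch_set N n1 m1 j. (\<Gamma> c - \<Gamma>hat c)\<^sup>2)) ` {..<N}"
    then obtain j where j: "j < N" and x: "x = sqrt (\<Sum>c\<in>patch_set N n1 m1 j. (\<Gamma> c - \<Gamma>hat c)\<^sup>2)" by auto
    define P where "P = patch_set N n1 m1 j"
    define Q where "Q = {c \<in> P. \<Gamma> c \<noteq> 0}"
    have finP: "finite P" unfolding P_def patch_set_def by simp
    have PL: "c < L" if "c \<in> P" for c using that unfolding P_def patch_set_def L_def by simp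
    have "(\<Sum>c\<in>P. (\<Gamma> c - \<Gamma>hat c)\<^sup>2) = (\<Sum>c\<in>Q. (\<Gamma> c - \<Gamma>hat c)\<^sup>2)"
      by (rule sum.mono_neutral_right[OF finP]) (use key PL in \<open>auto simp: Q_def\<close>)
    also have "\<dots> \<le> (\<Sum>c\<in>Q. B\<^sup>2)"
    proof (rule sum_mono)
      fix c assume "c \<in> Q"
      then have "\<bar>\<Gamma> c - \<Gamma>hat c\<bar> \<le> B" using key PL unfolding Q_def by auto
      then have "\<bar>\<Gamma> c - \<Gamma>hat c\<bar>\<^sup>2 \<le> B\<^sup>2" by (rule power_mono) simp
      then show "(\<Gamma> c - \<Gamma>hat c)\<^sup>2 \<le> B\<^sup>2" by simp
    qed
    also have "\<dots> = real (card Q) * B\<^sup>2" by simp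
    finally have "x \<le> sqrt (real (card Q) * B\<^sup>2)" unfolding x P_def by simp
    also have "\<dots> = sqrt (real (card Q)) * B" using B0 by (simp add: real_sqrt_mult)
    also have "\<dots> \<le> sqrt (real (norm_0inf_p N n1 m1 \<Gamma>)) * B"
    proof (rule mult_right_mono[OF _ B0])
      have "card Q \<le> norm_0inf_p N n1 m1 \<Gamma>" unfolding norm_0inf_p_def Q_def P_def
        by (rule Max_ge) (use j in auto)
      then show "sqrt (real (card Q)) \<le> sqrt (real (norm_0inf_p N n1 m1 \<Gamma>))" by simp
    qed
    finally show "x \<le> sqrt (real (norm_0inf_p N n1 m1 \<Gamma>)) * B" .
  qed
  show ?thesis using part1 part2 unfolding L_def B_def by simp
qed

end
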